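(* Let $X$ be a finite alphabet and let $M_1, M_2$ be monoids with monoid choices of generators $\sigma_1 : X^* \to M_1$ and $\sigma_2 : X^* \to M_2$. If $L_{\sigma_1}(M_1) = L_{\sigma_2}(M_2)$, then there is a monoid isomorphism $\rho : M_1 \to M_2$ such that $\sigma_1\rho = \sigma_2$ (i.e. $(w\sigma_1)\rho = w\sigma_2$ for all $w \in X^*$). The corresponding statement holds for semigroups $S_1, S_2$ with semigroup choices of generators $\sigma_1 : X^+ \to S_1$, $\sigma_2 : X^+ \to S_2$ (with a semigroup isomorphism $\rho$).
   Context: Maps are written on the right and composed left to right. $X^*$, $X^+$: free monoid and free semigroup on $X$. Let $\overline{X} = \{\overline{x} : x \in X\}$ be new symbols, $\hat{X} = X \cup \overline{X}$. For a monoid $M$ and surjective monoid morphism $\sigma : X^* \to M$, the loop automaton has vertex set $M$, for each $a \in M$, $x \in X$ an edge $a \to a(x\sigma)$ labelled $x$ and an edge $a(x\sigma) \to a$ labelled $\overline{x}$; the loop problem $L_\sigma(M) \subseteq \hat{X}^*$ is the set of labels of paths from the identity to the identity. For a semigroup $S$ and surjective morphism $\sigma : X^+ \to S$, $L_\sigma(S)$ is the loop problem of $S^1$ ($S$ with a new identity adjoined, even if one exists) with respect to the unique extension $\sigma^1 : X^* \to S^1$. *)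

theory Defs
  imports "HOL-Algebra.Group"
begin

(* Letters of \<hat>X = X \<union> \<overline>X : Pos x stands for x, Neg x for \<overline>x *)
datatype 'x hatlet = Pos 'x | Neg 'x

definition hat :: "'x set \<Rightarrow> 'x hatlet set" where
  "hat X = Pos ` X \<union> Neg ` X"

(* \<sigma> : X^* \<rightarrow> M is a surjective monoid morphism (a monoid choice of generators);
   X^* is rendered as lists X, maps are applied as ordinary functions *)
definition monoid_choice :: "'x set \<Rightarrow> ('m, 'r) monoid_scheme \<Rightarrow> ('x list \<Rightarrow> 'm) \<Rightarrow> bool" where
  "monoid_choice X M \<sigma> \<longleftrightarrow>
     monoid M \<and>
     (\<forall>w \<in> lists X. \<sigma> w \<in> carrier M) \<and>
     \<sigma> [] = \<one>\<^bsub>M\<^esub> \<and>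
     (\<forall>u \<in> lists X. \<forall>v \<in> lists X. \<sigma> (u @ v) = \<sigma> u \<otimes>\<^bsub>M\<^esub> \<sigma> v) \<and>
     \<sigma> ` lists X = carrier M"

(* a semigroup: associative closed multiplication on the carrier (the 'one' field is ignored) *)
definition is_semigroup :: "('m, 'r) monoid_scheme \<Rightarrow> bool" where
  "is_semigroup S \<longleftrightarrow>
     (\<forall>x \<in> carrier S. \<forall>y \<in> carrier S. x \<otimes>\<^bsub>S\<^esub> y \<in> carrier S) \<and>
     (\<forall>x \<in> carrier S. \<forall>y \<in> carrier S. \<forall>z \<in> carrier S.
        (x \<otimes>\<^bsub>S\<^esub> y) \<otimes>\<^bsub>S\<^esub> z = x \<otimes>\<^bsub>S\<^esub> (y \<otimes>\<^bsub>S\<^esub> z))"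

definition plus_words :: "'x set \<Rightarrow> 'x list set" where
  "plus_words X = lists X - {[]}"

(* \<sigma> : X^+ \<rightarrow> S is a surjective semigroup morphism (values on [] are irrelevant) *)
definition semigroup_choice :: "'x set \<Rightarrow> ('m, 'r) monoid_scheme \<Rightarrow> ('x list \<Rightarrow> 'm) \<Rightarrow> bool" where
  "semigroup_choice X S \<sigma> \<longleftrightarrow>
     is_semigroup S \<and>
     (\<forall>w \<in> plus_words X. \<sigma> w \<in> carrier S) \<and>
     (\<forall>u \<in> plus_words X. \<forall>v \<in> plus_words X. \<sigma> (u @ v) = \<sigma> u \<otimes>\<^bsub>S\<^esub> \<sigma> v) \<and>
     \<sigma> ` plus_words X = carrier S"

(* paths in the loop automaton of (M, \<sigma>): edge a \<rightarrow> a(x\<sigma>) labelled x,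
   edge a(x\<sigma>) \<rightarrow> a labelled \<overline>x, for a \<in> M, x \<in> X *)
inductive loop_path :: "'x set \<Rightarrow> ('m, 'r) monoid_scheme \<Rightarrow> ('x list \<Rightarrow> 'm)
    \<Rightarrow> 'm \<Rightarrow> 'x hatlet list \<Rightarrow> 'm \<Rightarrow> bool"
  for X M \<sigma> where
  nil: "a \<in> carrier M \<Longrightarrow> loop_path X M \<sigma> a [] a"
| pos: "\<lbrakk>a \<in> carrier M; x \<in> X; loop_path X M \<sigma> (a \<otimes>\<^bsub>M\<^esub> \<sigma> [x]) w b\<rbrakk>
        \<Longrightarrow> loop_path X M \<sigma> a (Pos x # w) b"
| neg: "\<lbrakk>a \<in> carrier M; x \<in> X; loop_path X M \<sigma> a w b\<rbrakk>
        \<Longrightarrow> loop_path X M \<sigma> (a \<otimes>\<^bsub>M\<^esub> \<sigma> [x]) (Neg x # w) b"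

definition loop_problem :: "'x set \<Rightarrow> ('m, 'r) monoid_scheme \<Rightarrow> ('x list \<Rightarrow> 'm) \<Rightarrow> 'x hatlet list set" where
  "loop_problem X M \<sigma> = {w \<in> lists (hat X). loop_path X M \<sigma> \<one>\<^bsub>M\<^esub> w \<one>\<^bsub>M\<^esub>}"

(* S^1: S with a new identity None adjoined *)
definition adjoin_one :: "('m, 'r) monoid_scheme \<Rightarrow> 'm option monoid" where
  "adjoin_one S = \<lparr>carrier = insert None (Some ` carrier S),
     mult = (\<lambda>a b. case a of None \<Rightarrow> b
                      | Some x \<Rightarrow> (case b of None \<Rightarrow> Some x | Some y \<Rightarrow> Some (x \<otimes>\<^bsub>S\<^esub> y))),
     one = None\<rparr>"

definition ext_one :: "('x list \<Rightarrow> 'm) \<Rightarrow> 'x list \<Rightarrow> 'm option" where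
  "ext_one \<sigma> w = (if w = [] then None else Some (\<sigma> w))"

definition semigroup_loop_problem :: "'x set \<Rightarrow> ('m, 'r) monoid_scheme \<Rightarrow> ('x list \<Rightarrow> 'm) \<Rightarrow> 'x hatlet list set" where
  "semigroup_loop_problem X S \<sigma> = loop_problem X (adjoin_one S) (ext_one \<sigma>)"

end

theory Submission
  imports Defs
begin

lemma iso_from_kernel:
  assumes s1: "f1 ` W = carrier A" and s2: "f2 ` W = carrier B"
    and k: "\<forall>u\<in>W. \<forall>v\<in>W. f1 u = f1 v \<longleftrightarrow> f2 u = f2 v"
    and h: "\<forall>u\<in>W. \<forall>v\<in>W. u @ v \<in> W \<and> f1 (u @ v) = f1 u \<otimes>\<^bsub>A\<^esub> f1 v
              \<and> f2 (u @ v) = f2 u \<otimes>\<^bsub>B\<^esub> f2 v"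
  shows "\<exists>\<rho> \<in> iso A B. \<forall>w\<in>W. \<rho> (f1 w) = f2 w"
proof -
  define \<rho> where "\<rho> = (\<lambda>m. f2 (SOME u. u \<in> W \<and> f1 u = m))"
  have r: "\<rho> (f1 w) = f2 w" if "w \<in> W" for w
  proof -
    have "\<exists>u. u \<in> W \<and> f1 u = f1 w" using that by blast
    then have "(SOME u. u \<in> W \<and> f1 u = f1 w) \<in> W \<and> f1 (SOME u. u \<in> W \<and> f1 u = f1 w) = f1 w"
      by (rule someI_ex)
    then show ?thesis unfolding \<rho>_def using k that by blast
  qed
  have "\<rho> \<in> hom A B"
  proof (unfold hom_def, safe)
    fix x assume "x \<in> carrier A"
    then obtain u where "u \<in> W" "x = f1 u" using s1 by auto
    then show "\<rho> x \<in> carrier B" using r s2 by auto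
  next
    fix x y assume "x \<in> carrier A" "y \<in> carrier A"
    then obtain u v where "u \<in> W" "x = f1 u" "v \<in> W" "y = f1 v" using s1 by blast
    then show "\<rho> (x \<otimes>\<^bsub>A\<^esub> y) = \<rho> x \<otimes>\<^bsub>B\<^esub> \<rho> y" using r h by metis
  qed
  moreover have "bij_betw \<rho> (carrier A) (carrier B)"
  proof (unfold bij_betw_def, safe)
    show "inj_on \<rho> (carrier A)"
    proof (rule inj_onI)
      fix x y assume "x \<in> carrier A" "y \<in> carrier A" "\<rho> x = \<rho> y"
      moreover obtain u v where "u \<in> W" "x = f1 u" "v \<in> W" "y = f1 v"
        using s1 \<open>x \<in> carrier A\<close> \<open>y \<in> carrier A\<close> by blast
      ultimately show "x = y" using r k by metis
    qed
  next
    fix x assume "x \<in> carrier A"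
    then obtain u where "u \<in> W" "x = f1 u" using s1 by auto
    then show "\<rho> x \<in> carrier B" using r s2 by auto
  next
    fix y assume "y \<in> carrier B"
    then obtain u where "u \<in> W" "y = f2 u" using s2 by auto
    then show "y \<in> \<rho> ` carrier A" using r s1 by (metis image_eqI)
  qed
  ultimately show ?thesis unfolding iso_def using r by blast
qed

lemma nil_iff: "loop_path X M \<sigma> a [] b \<longleftrightarrow> a \<in> carrier M \<and> b = a"
proof
  assume "loop_path X M \<sigma> a [] b" then show "a \<in> carrier M \<and> b = a"
    by (cases rule: loop_path.cases) auto
qed (elim conjE, hypsubst, rule loop_path.nil, assumption)

lemma pos_iff: "loop_path X M \<sigma> a (Pos x # w) b \<longleftrightarrow>
   a \<in> carrier M \<and> x \<in> X \<and> loop_path X M \<sigma> (a \<otimes>\<^bsub>M\<^esub> \<sigma> [x]) w b"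
proof
  assume "loop_path X M \<sigma> a (Pos x # w) b" then show "a \<in> carrier M \<and> x \<in> X \<and> loop_path X M \<sigma> (a \<otimes>\<^bsub>M\<^esub> \<sigma> [x]) w b"
    by (cases rule: loop_path.cases) auto
qed (elim conjE, rule loop_path.pos, assumption+)

lemma neg_iff: "loop_path X M \<sigma> b (Neg x # w) c \<longleftrightarrow>
   (\<exists>a. a \<in> carrier M \<and> x \<in> X \<and> b = a \<otimes>\<^bsub>M\<^esub> \<sigma> [x] \<and> loop_path X M \<sigma> a w c)"
proof
  assume "loop_path X M \<sigma> b (Neg x # w) c" then show "\<exists>a. a \<in> carrier M \<and> x \<in> X \<and> b = a \<otimes>\<^bsub>M\<^esub> \<sigma> [x] \<and> loop_path X M \<sigma> a w c"
    by (cases rule: loop_path.cases) auto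
qed (elim exE conjE, hypsubst, rule loop_path.neg, assumption+)

lemma path_pos:
  assumes mc: "monoid_choice X M \<sigma>" and u: "u \<in> lists X"
  shows "a \<in> carrier M \<Longrightarrow> loop_path X M \<sigma> a (map Pos u @ w) b \<longleftrightarrow> loop_path X M \<sigma> (a \<otimes>\<^bsub>M\<^esub> \<sigma> u) w b"
  using u
proof (induction u arbitrary: a)
  case Nil
  interpret monoid M using mc unfolding monoid_choice_def by blast
  show ?case using Nil mc unfolding monoid_choice_def by simp
next
  case (Cons x u)
  interpret monoid M using mc unfolding monoid_choice_def by blast
  have x: "x \<in> X" "u \<in> lists X" using Cons by auto
  have cx: "\<sigma> [x] \<in> carrier M" "\<sigma> u \<in> carrier M" using mc x unfolding monoid_choice_def by auto
  have e: "\<sigma> (x # u) = \<sigma> [x] \<otimes>\<^bsub>M\<^esub> \<sigma> u" using mc x unfolding monoid_choice_def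
    by (metis append_Cons append_Nil lists.Cons lists.Nil)
  have "loop_path X M \<sigma> a (Pos x # (map Pos u @ w)) b \<longleftrightarrow> loop_path X M \<sigma> (a \<otimes>\<^bsub>M\<^esub> \<sigma> [x]) (map Pos u @ w) b"
    using Cons.prems x by (simp add: pos_iff)
  also have "\<dots> \<longleftrightarrow> loop_path X M \<sigma> (a \<otimes>\<^bsub>M\<^esub> \<sigma> [x] \<otimes>\<^bsub>M\<^esub> \<sigma> u) w b"
    using Cons.IH x cx Cons.prems by simp
  finally show ?case using e cx Cons.prems by (simp add: m_assoc)
qed

lemma path_neg:
  assumes mc: "monoid_choice X M \<sigma>" and v: "v \<in> lists X"
  shows "loop_path X M \<sigma> b (rev (map Neg v)) c \<longleftrightarrow> c \<in> carrier M \<and> b = c \<otimes>\<^bsub>M\<^esub> \<sigma> v"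
  using v
proof (induction v arbitrary: b rule: rev_induct)
  case Nil
  interpret monoid M using mc unfolding monoid_choice_def by blast
  show ?case using mc unfolding monoid_choice_def by (auto simp add: nil_iff)
next
  case (snoc x v)
  interpret monoid M using mc unfolding monoid_choice_def by blast
  have x: "x \<in> X" "v \<in> lists X" using snoc by auto
  have cx: "\<sigma> [x] \<in> carrier M" "\<sigma> v \<in> carrier M" using mc x unfolding monoid_choice_def by auto
  have e: "\<sigma> (v @ [x]) = \<sigma> v \<otimes>\<^bsub>M\<^esub> \<sigma> [x]" using mc x unfolding monoid_choice_def by auto
  have "loop_path X M \<sigma> b (Neg x # rev (map Neg v)) c \<longleftrightarrow>
        (\<exists>a. a \<in> carrier M \<and> b = a \<otimes>\<^bsub>M\<^esub> \<sigma> [x] \<and> loop_path X M \<sigma> a (rev (map Neg v)) c)"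
    using x by (simp add: neg_iff)
  also have "\<dots> \<longleftrightarrow> c \<in> carrier M \<and> b = c \<otimes>\<^bsub>M\<^esub> \<sigma> (v @ [x])"
  proof
    assume "\<exists>a. a \<in> carrier M \<and> b = a \<otimes>\<^bsub>M\<^esub> \<sigma> [x] \<and> loop_path X M \<sigma> a (rev (map Neg v)) c"
    then obtain a where a: "a \<in> carrier M" "b = a \<otimes>\<^bsub>M\<^esub> \<sigma> [x]" "loop_path X M \<sigma> a (rev (map Neg v)) c" by blast
    then have "c \<in> carrier M" "a = c \<otimes>\<^bsub>M\<^esub> \<sigma> v" using snoc.IH[OF x(2)] by blast+
    then show "c \<in> carrier M \<and> b = c \<otimes>\<^bsub>M\<^esub> \<sigma> (v @ [x])" using a(2) e cx by (simp add: m_assoc)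
  next
    assume c: "c \<in> carrier M \<and> b = c \<otimes>\<^bsub>M\<^esub> \<sigma> (v @ [x])"
    have "loop_path X M \<sigma> (c \<otimes>\<^bsub>M\<^esub> \<sigma> v) (rev (map Neg v)) c" using snoc.IH[OF x(2)] c by blast
    moreover have "b = (c \<otimes>\<^bsub>M\<^esub> \<sigma> v) \<otimes>\<^bsub>M\<^esub> \<sigma> [x]" using c e cx by (simp add: m_assoc)
    ultimately show "\<exists>a. a \<in> carrier M \<and> b = a \<otimes>\<^bsub>M\<^esub> \<sigma> [x] \<and> loop_path X M \<sigma> a (rev (map Neg v)) c"
      using c cx by blast
  qed
  finally show ?case by simp
qed

lemma loop_kernel:
  assumes mc: "monoid_choice X M \<sigma>" and u: "u \<in> lists X" and v: "v \<in> lists X"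
  shows "map Pos u @ rev (map Neg v) \<in> loop_problem X M \<sigma> \<longleftrightarrow> \<sigma> u = \<sigma> v"
proof -
  interpret monoid M using mc unfolding monoid_choice_def by blast
  have cu: "\<sigma> u \<in> carrier M" "\<sigma> v \<in> carrier M" using mc u v unfolding monoid_choice_def by auto
  have "map Pos u @ rev (map Neg v) \<in> lists (hat X)" using u v unfolding hat_def by auto
  have "loop_path X M \<sigma> \<one>\<^bsub>M\<^esub> (map Pos u @ rev (map Neg v)) \<one>\<^bsub>M\<^esub>
     \<longleftrightarrow> loop_path X M \<sigma> (\<one>\<^bsub>M\<^esub> \<otimes>\<^bsub>M\<^esub> \<sigma> u) (rev (map Neg v)) \<one>\<^bsub>M\<^esub>"
    by (rule path_pos[OF mc u]) simp
  also have "\<dots> \<longleftrightarrow> \<one>\<^bsub>M\<^esub> \<in> carrier M \<and> \<one>\<^bsub>M\<^esub> \<otimes>\<^bsub>M\<^esub> \<sigma> u = \<one>\<^bsub>M\<^esub> \<otimes>\<^bsub>M\<^esub> \<sigma> v"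
    by (rule path_neg[OF mc v])
  also have "\<dots> \<longleftrightarrow> \<sigma> u = \<sigma> v" using cu by simp
  finally show ?thesis unfolding loop_problem_def using \<open>_ \<in> lists (hat X)\<close> by simp
qed

lemma adjoin_monoid:
  assumes "is_semigroup S"
  shows "monoid (adjoin_one S)"
proof -
  have cl: "\<And>x y. x \<in> carrier S \<Longrightarrow> y \<in> carrier S \<Longrightarrow> x \<otimes>\<^bsub>S\<^esub> y \<in> carrier S"
    and as: "\<And>x y z. x \<in> carrier S \<Longrightarrow> y \<in> carrier S \<Longrightarrow> z \<in> carrier S \<Longrightarrow>
        (x \<otimes>\<^bsub>S\<^esub> y) \<otimes>\<^bsub>S\<^esub> z = x \<otimes>\<^bsub>S\<^esub> (y \<otimes>\<^bsub>S\<^esub> z)"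
    using assms unfolding is_semigroup_def by blast+
  have c: "carrier (adjoin_one S) = insert None (Some ` carrier S)" by (simp add: adjoin_one_def)
  have o: "\<one>\<^bsub>adjoin_one S\<^esub> = None" by (simp add: adjoin_one_def)
  have m: "\<And>a b. a \<otimes>\<^bsub>adjoin_one S\<^esub> b = (case a of None \<Rightarrow> b
                      | Some x \<Rightarrow> (case b of None \<Rightarrow> Some x | Some y \<Rightarrow> Some (x \<otimes>\<^bsub>S\<^esub> y)))"
    by (simp add: adjoin_one_def)
  show ?thesis
  proof (rule monoidI)
    fix x y assume "x \<in> carrier (adjoin_one S)" "y \<in> carrier (adjoin_one S)"
    then show "x \<otimes>\<^bsub>adjoin_one S\<^esub> y \<in> carrier (adjoin_one S)"
      unfolding c m using cl by (cases x; cases y) auto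
  next
    show "\<one>\<^bsub>adjoin_one S\<^esub> \<in> carrier (adjoin_one S)" unfolding c o by simp
  next
    fix x y z assume "x \<in> carrier (adjoin_one S)" "y \<in> carrier (adjoin_one S)" "z \<in> carrier (adjoin_one S)"
    then show "x \<otimes>\<^bsub>adjoin_one S\<^esub> y \<otimes>\<^bsub>adjoin_one S\<^esub> z =
        x \<otimes>\<^bsub>adjoin_one S\<^esub> (y \<otimes>\<^bsub>adjoin_one S\<^esub> z)"
      unfolding c m using as by (cases x; cases y; cases z) auto
  next
    fix x show "\<one>\<^bsub>adjoin_one S\<^esub> \<otimes>\<^bsub>adjoin_one S\<^esub> x = x" unfolding o m by simp
  next
    fix x show "x \<otimes>\<^bsub>adjoin_one S\<^esub> \<one>\<^bsub>adjoin_one S\<^esub> = x" unfolding o m by (cases x) simp_all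
  qed
qed

lemma adjoin_choice:
  assumes "semigroup_choice X S \<tau>"
  shows "monoid_choice X (adjoin_one S) (ext_one \<tau>)"
proof -
  have sg: "is_semigroup S" using assms unfolding semigroup_choice_def by blast
  have a: "\<forall>w\<in>plus_words X. \<tau> w \<in> carrier S"
    "\<forall>u\<in>plus_words X. \<forall>v\<in>plus_words X. \<tau> (u @ v) = \<tau> u \<otimes>\<^bsub>S\<^esub> \<tau> v"
    "\<tau> ` plus_words X = carrier S" using assms unfolding semigroup_choice_def by blast+
  have im: "ext_one \<tau> ` lists X = insert None (Some ` carrier S)"
  proof
    show "ext_one \<tau> ` lists X \<subseteq> insert None (Some ` carrier S)"
    proof
      fix y assume "y \<in> ext_one \<tau> ` lists X"
      then obtain w where w: "w \<in> lists X" "y = ext_one \<tau> w" by blast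
      show "y \<in> insert None (Some ` carrier S)"
      proof (cases "w = []")
        case True then show ?thesis using w by (simp add: ext_one_def)
      next
        case False
        then have "w \<in> plus_words X" using w unfolding plus_words_def by blast
        then have "\<tau> w \<in> carrier S" using a(1) by blast
        then show ?thesis using w False by (simp add: ext_one_def)
      qed
    qed
  next
    show "insert None (Some ` carrier S) \<subseteq> ext_one \<tau> ` lists X"
    proof
      fix y assume "y \<in> insert None (Some ` carrier S)"
      then show "y \<in> ext_one \<tau> ` lists X"
      proof
        assume "y = None"
        then have "y = ext_one \<tau> []" by (simp add: ext_one_def)
        then show ?thesis by (rule image_eqI) simp
      next
        assume "y \<in> Some ` carrier S"
        then obtain z where z: "z \<in> carrier S" "y = Some z" by blast
        then obtain w where w: "w \<in> plus_words X" "z = \<tau> w" using a(3) by blast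
        then have "w \<in> lists X" "w \<noteq> []" unfolding plus_words_def by blast+
        then have "y = ext_one \<tau> w" using z w by (simp add: ext_one_def)
        then show ?thesis using \<open>w \<in> lists X\<close> by blast
      qed
    qed
  qed
  have c: "carrier (adjoin_one S) = insert None (Some ` carrier S)" by (simp add: adjoin_one_def)
  have o: "\<one>\<^bsub>adjoin_one S\<^esub> = None" by (simp add: adjoin_one_def)
  have m: "\<And>a b. a \<otimes>\<^bsub>adjoin_one S\<^esub> b = (case a of None \<Rightarrow> b
                      | Some x \<Rightarrow> (case b of None \<Rightarrow> Some x | Some y \<Rightarrow> Some (x \<otimes>\<^bsub>S\<^esub> y)))"
    by (simp add: adjoin_one_def)
  have h: "ext_one \<tau> (u @ v) = ext_one \<tau> u \<otimes>\<^bsub>adjoin_one S\<^esub> ext_one \<tau> v"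
    if "u \<in> lists X" "v \<in> lists X" for u v
  proof (cases "u = [] \<or> v = []")
    case True then show ?thesis unfolding m ext_one_def by auto
  next
    case False
    then have "u \<in> plus_words X" "v \<in> plus_words X" using that unfolding plus_words_def by auto
    then show ?thesis using False a(2) unfolding m ext_one_def by auto
  qed
  have cl: "ext_one \<tau> w \<in> carrier (adjoin_one S)" if "w \<in> lists X" for w
    using im that c by blast
  show ?thesis unfolding monoid_choice_def
    using adjoin_monoid[OF sg] h cl im c o by (simp add: ext_one_def)
qed

theorem corollary4p3:
  fixes X :: "'x set"
    and M1 :: "('a, 'r1) monoid_scheme" and M2 :: "('b, 'r2) monoid_scheme"
    and \<sigma>1 :: "'x list \<Rightarrow> 'a" and \<sigma>2 :: "'x list \<Rightarrow> 'b"
    and S1 :: "('c, 'r3) monoid_scheme" and S2 :: "('d, 'r4) monoid_scheme"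
    and \<tau>1 :: "'x list \<Rightarrow> 'c" and \<tau>2 :: "'x list \<Rightarrow> 'd"
  assumes "finite X"
  shows "(monoid_choice X M1 \<sigma>1 \<and> monoid_choice X M2 \<sigma>2 \<and>
           loop_problem X M1 \<sigma>1 = loop_problem X M2 \<sigma>2 \<longrightarrow>
           (\<exists>\<rho> \<in> iso M1 M2. \<forall>w \<in> lists X. \<rho> (\<sigma>1 w) = \<sigma>2 w))
       \<and> (semigroup_choice X S1 \<tau>1 \<and> semigroup_choice X S2 \<tau>2 \<and>
           semigroup_loop_problem X S1 \<tau>1 = semigroup_loop_problem X S2 \<tau>2 \<longrightarrow>
           (\<exists>\<rho> \<in> iso S1 S2. \<forall>w \<in> plus_words X. \<rho> (\<tau>1 w) = \<tau>2 w))"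
proof (intro conjI impI)
  assume H: "monoid_choice X M1 \<sigma>1 \<and> monoid_choice X M2 \<sigma>2 \<and>
           loop_problem X M1 \<sigma>1 = loop_problem X M2 \<sigma>2"
  have k: "\<forall>u\<in>lists X. \<forall>v\<in>lists X. \<sigma>1 u = \<sigma>1 v \<longleftrightarrow> \<sigma>2 u = \<sigma>2 v"
  proof (intro ballI)
    fix u v assume u: "u \<in> lists X" and v: "v \<in> lists X"
    have "\<sigma>1 u = \<sigma>1 v \<longleftrightarrow> map Pos u @ rev (map Neg v) \<in> loop_problem X M1 \<sigma>1"
      using loop_kernel[of X M1 \<sigma>1 u v] H u v by blast
    also have "\<dots> \<longleftrightarrow> map Pos u @ rev (map Neg v) \<in> loop_problem X M2 \<sigma>2" using H by (simp only:)
    also have "\<dots> \<longleftrightarrow> \<sigma>2 u = \<sigma>2 v" using loop_kernel[of X M2 \<sigma>2 u v] H u v by simp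
    finally show "\<sigma>1 u = \<sigma>1 v \<longleftrightarrow> \<sigma>2 u = \<sigma>2 v" .
  qed
  show "\<exists>\<rho> \<in> iso M1 M2. \<forall>w \<in> lists X. \<rho> (\<sigma>1 w) = \<sigma>2 w"
  proof (rule iso_from_kernel[OF _ _ k])
    have m1: "monoid_choice X M1 \<sigma>1" and m2: "monoid_choice X M2 \<sigma>2" using H by blast+
    show "\<sigma>1 ` lists X = carrier M1" using m1 unfolding monoid_choice_def by blast
    show "\<sigma>2 ` lists X = carrier M2" using m2 unfolding monoid_choice_def by blast
    have h1: "\<forall>u\<in>lists X. \<forall>v\<in>lists X. \<sigma>1 (u @ v) = \<sigma>1 u \<otimes>\<^bsub>M1\<^esub> \<sigma>1 v"
      using m1 unfolding monoid_choice_def by blast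
    have h2: "\<forall>u\<in>lists X. \<forall>v\<in>lists X. \<sigma>2 (u @ v) = \<sigma>2 u \<otimes>\<^bsub>M2\<^esub> \<sigma>2 v"
      using m2 unfolding monoid_choice_def by blast
    show "\<forall>u\<in>lists X. \<forall>v\<in>lists X. u @ v \<in> lists X \<and> \<sigma>1 (u @ v) = \<sigma>1 u \<otimes>\<^bsub>M1\<^esub> \<sigma>1 v
              \<and> \<sigma>2 (u @ v) = \<sigma>2 u \<otimes>\<^bsub>M2\<^esub> \<sigma>2 v"
      using h1 h2 by simp
  qed
next
  assume H: "semigroup_choice X S1 \<tau>1 \<and> semigroup_choice X S2 \<tau>2 \<and>
           semigroup_loop_problem X S1 \<tau>1 = semigroup_loop_problem X S2 \<tau>2"
  have c1: "monoid_choice X (adjoin_one S1) (ext_one \<tau>1)"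
    and c2: "monoid_choice X (adjoin_one S2) (ext_one \<tau>2)" using H adjoin_choice by blast+
  have k0: "\<forall>u\<in>lists X. \<forall>v\<in>lists X. ext_one \<tau>1 u = ext_one \<tau>1 v \<longleftrightarrow> ext_one \<tau>2 u = ext_one \<tau>2 v"
  proof (intro ballI)
    fix u v assume u: "u \<in> lists X" and v: "v \<in> lists X"
    have "ext_one \<tau>1 u = ext_one \<tau>1 v \<longleftrightarrow> map Pos u @ rev (map Neg v) \<in> semigroup_loop_problem X S1 \<tau>1"
      unfolding semigroup_loop_problem_def using loop_kernel[OF c1 u v] by simp
    also have "\<dots> \<longleftrightarrow> map Pos u @ rev (map Neg v) \<in> semigroup_loop_problem X S2 \<tau>2" using H by (simp only:)
    also have "\<dots> \<longleftrightarrow> ext_one \<tau>2 u = ext_one \<tau>2 v"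
      unfolding semigroup_loop_problem_def using loop_kernel[OF c2 u v] by simp
    finally show "ext_one \<tau>1 u = ext_one \<tau>1 v \<longleftrightarrow> ext_one \<tau>2 u = ext_one \<tau>2 v" .
  qed
  have k: "\<forall>u\<in>plus_words X. \<forall>v\<in>plus_words X. \<tau>1 u = \<tau>1 v \<longleftrightarrow> \<tau>2 u = \<tau>2 v"
  proof (intro ballI)
    fix u v assume "u \<in> plus_words X" "v \<in> plus_words X"
    then have uv: "u \<in> lists X" "v \<in> lists X" "u \<noteq> []" "v \<noteq> []" unfolding plus_words_def by blast+
    then have "ext_one \<tau>1 u = ext_one \<tau>1 v \<longleftrightarrow> ext_one \<tau>2 u = ext_one \<tau>2 v" using k0 by blast
    then show "\<tau>1 u = \<tau>1 v \<longleftrightarrow> \<tau>2 u = \<tau>2 v"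
      using uv(3,4) by (simp add: ext_one_def)
  qed
  show "\<exists>\<rho> \<in> iso S1 S2. \<forall>w \<in> plus_words X. \<rho> (\<tau>1 w) = \<tau>2 w"
  proof (rule iso_from_kernel[OF _ _ k])
    have m1: "semigroup_choice X S1 \<tau>1" and m2: "semigroup_choice X S2 \<tau>2" using H by blast+
    show "\<tau>1 ` plus_words X = carrier S1" using m1 unfolding semigroup_choice_def by blast
    show "\<tau>2 ` plus_words X = carrier S2" using m2 unfolding semigroup_choice_def by blast
    have h1: "\<forall>u\<in>plus_words X. \<forall>v\<in>plus_words X. \<tau>1 (u @ v) = \<tau>1 u \<otimes>\<^bsub>S1\<^esub> \<tau>1 v"
      using m1 unfolding semigroup_choice_def by blast
    have h2: "\<forall>u\<in>plus_words X. \<forall>v\<in>plus_words X. \<tau>2 (u @ v) = \<tau>2 u \<otimes>\<^bsub>S2\<^esub> \<tau>2 v"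
      using m2 unfolding semigroup_choice_def by blast
    have cl: "\<forall>u\<in>plus_words X. \<forall>v\<in>plus_words X. u @ v \<in> plus_words X"
      unfolding plus_words_def by simp
    show "\<forall>u\<in>plus_words X. \<forall>v\<in>plus_words X. u @ v \<in> plus_words X \<and> \<tau>1 (u @ v) = \<tau>1 u \<otimes>\<^bsub>S1\<^esub> \<tau>1 v
              \<and> \<tau>2 (u @ v) = \<tau>2 u \<otimes>\<^bsub>S2\<^esub> \<tau>2 v"
      using h1 h2 cl by blast
  qed
qed

end
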